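(* For all integers $1\leqslant k\leqslant d-1$, $$n(k,d)\geqslant \sum_{i=0}^{\lfloor k/2\rfloor}\binom{d}{i}.$$ Moreover, for all positive integers $k,d,t$ with $1\leqslant k\leqslant k+2t-2\leqslant d-1$, $$n(k,d)\leqslant 2^{d-t}+\sum_{i=0}^{\lceil (k+2t-2)/2\rceil}\binom{d}{i}.$$
   Context: A standard box in $\mathbb{R}^d$ is a set $K=K_1\times\cdots\times K_d$ where each $K_i\subset\mathbb{R}$ is a closed interval. For integers $1\leqslant k\leqslant d$, two standard boxes $K,L\subset\mathbb{R}^d$ are $k$-neighborly if $d-k\leqslant \dim(K\cap L)\leqslant d-1$, and a family of standard boxes is $k$-neighborly if every two distinct members are $k$-neighborly. $n(k,d)$ denotes the maximum possible cardinality of a $k$-neighborly family of standard boxes in $\mathbb{R}^d$. (Equivalently, $n(k,d)$ is the maximum number of vertices of a complete graph whose edges can be covered by $d$ complete bipartite subgraphs so that every edge is covered at least once and at most $k$ times.) *)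

theory Defs
  imports "HOL-Analysis.Analysis" "HOL-Library.Extended_Nat"
begin

definition standard_box :: "(real^'n) set \<Rightarrow> bool" where
  "standard_box K \<longleftrightarrow> (\<exists>a b. (\<forall>i. a $ i < b $ i) \<and> K = cbox a b)"

definition k_neighborly :: "nat \<Rightarrow> (real^'n) set \<Rightarrow> (real^'n) set \<Rightarrow> bool" where
  "k_neighborly k K L \<longleftrightarrow>
     int CARD('n) - int k \<le> aff_dim (K \<inter> L) \<and> aff_dim (K \<inter> L) \<le> int CARD('n) - 1"

definition k_neighborly_family :: "nat \<Rightarrow> (real^'n) set set \<Rightarrow> bool" where
  "k_neighborly_family k F \<longleftrightarrow>
     (\<forall>K\<in>F. standard_box K) \<and> (\<forall>K\<in>F. \<forall>L\<in>F. K \<noteq> L \<longrightarrow> k_neighborly k K L)"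

text \<open>n(k,d) with d = CARD('n), as an extended natural (supremum of family sizes;
  an infinite family counts as infinity).\<close>
definition n_nb :: "nat \<Rightarrow> 'n::finite itself \<Rightarrow> enat" where
  "n_nb k _ = Sup ((\<lambda>F. if finite F then enat (card F) else \<infinity>) `
                   {F :: (real^'n) set set. k_neighborly_family k F})"

end

theory Submission
  imports Defs
begin


lemma aff_dim_cbox_cart:
  fixes u v :: "real^'n"
  assumes le: "\<forall>i. u$i \<le> v$i"
  shows "aff_dim (cbox u v) = int (card {i. u$i < v$i})"
proof -
  let ?I = "{i. u$i < v$i}"
  let ?S = "(\<lambda>x. x - u) ` cbox u v"
  let ?T = "{x::real^'n. \<forall>i. i \<notin> ?I \<longrightarrow> x$i = 0}"
  have uin: "u \<in> cbox u v" using le by (simp add: mem_box_cart)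
  have 1: "aff_dim (cbox u v) = int (dim ?S)"
    by (rule aff_dim_eq_dim_subtract) (simp add: hull_inc uin)
  have ST: "?S \<subseteq> ?T"
  proof
    fix y assume "y \<in> ?S"
    then obtain x where x: "x \<in> cbox u v" "y = x - u" by auto
    show "y \<in> ?T"
    proof (intro CollectI allI impI)
      fix i assume "i \<notin> ?I"
      then have "u$i = v$i" using le[rule_format, of i] by auto
      with x show "y$i = 0" by (auto simp: mem_box_cart) (metis order_antisym)
    qed
  qed
  have subT: "subspace ?T" by (auto simp: subspace_def)
  have TS: "?T \<subseteq> span ?S"
  proof
    fix x assume xT: "x \<in> ?T"
    have "x = (\<Sum>i\<in>UNIV. x$i *\<^sub>R axis i 1)"
      using basis_expansion[of x] by (simp add: scalar_mult_eq_scaleR)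
    also have "\<dots> \<in> span ?S"
    proof (rule span_sum)
      fix i :: 'n
      show "x$i *\<^sub>R axis i (1::real) \<in> span ?S"
      proof (cases "i \<in> ?I")
        case True
        have "u + (v$i - u$i) *\<^sub>R axis i 1 \<in> cbox u v"
          using le True by (auto simp: mem_box_cart axis_def)
        moreover have "(v$i - u$i) *\<^sub>R axis i (1::real) = (u + (v$i - u$i) *\<^sub>R axis i 1) - u" by simp
        ultimately have "(v$i - u$i) *\<^sub>R axis i (1::real) \<in> ?S" by (rule rev_image_eqI)
        then have "(x$i / (v$i - u$i)) *\<^sub>R ((v$i - u$i) *\<^sub>R axis i (1::real)) \<in> span ?S"
          by (intro span_mul span_base)
        moreover have "(x$i / (v$i - u$i)) *\<^sub>R ((v$i - u$i) *\<^sub>R axis i (1::real)) = x$i *\<^sub>R axis i 1"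
          using True by simp
        ultimately show ?thesis by simp
      next
        case False
        then have "x$i = 0" using xT by auto
        then show ?thesis by (simp add: span_zero)
      qed
    qed
    finally show "x \<in> span ?S" .
  qed
  have "span ?S = ?T"
    using ST TS subT span_minimal[OF ST subT] by (rule_tac subset_antisym) auto
  then have "dim ?S = dim ?T" using dim_span[of ?S] by simp
  also have "\<dots> = card ?I"
  proof -
    have "vec.dim ?T = card ?I" by (rule dim_substandard_cart)
    moreover have "vec.dim ?T = dim ?T" by (rule dim_vec_eq)
    ultimately show ?thesis by simp
  qed
  finally show ?thesis using 1 by simp
qed



definition Sball :: "nat \<Rightarrow> nat \<Rightarrow> nat" where
  "Sball n r = (\<Sum>i=0..r. n choose i)"

lemma card_small_subsets:
  assumes "finite V"
  shows "card {X. X \<subseteq> V \<and> card X \<le> r} = Sball (card V) r"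
proof -
  have eq: "{X. X \<subseteq> V \<and> card X \<le> r} = (\<Union>i\<in>{0..r}. {X. X \<subseteq> V \<and> card X = i})"
    by auto
  have "card (\<Union>i\<in>{0..r}. {X. X \<subseteq> V \<and> card X = i}) = (\<Sum>i=0..r. card {X. X \<subseteq> V \<and> card X = i})"
  proof (rule card_UN_disjoint)
    show "finite {0..r}" by simp
    show "\<forall>i\<in>{0..r}. finite {X. X \<subseteq> V \<and> card X = i}"
      using assms by (auto intro: finite_subset[of _ "Pow V"])
    show "\<forall>i\<in>{0..r}. \<forall>j\<in>{0..r}. i \<noteq> j \<longrightarrow> {X. X \<subseteq> V \<and> card X = i} \<inter> {X. X \<subseteq> V \<and> card X = j} = {}"
      by auto
  qed
  also have "\<dots> = (\<Sum>i=0..r. card V choose i)"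
    using n_subsets[OF assms] by simp
  finally show ?thesis using eq by (simp add: Sball_def)
qed

lemma Sball_Suc: "Sball n (Suc r) = Sball n r + (n choose Suc r)"
  unfolding Sball_def by simp

lemma Sball_rec: "Sball (Suc n) (Suc r) = Sball n (Suc r) + Sball n r"
proof (induction r)
  case 0
  then show ?case by (simp add: Sball_def)
next
  case (Suc r)
  have "Sball (Suc n) (Suc (Suc r)) = Sball (Suc n) (Suc r) + (Suc n choose Suc (Suc r))"
    by (rule Sball_Suc)
  also have "\<dots> = Sball n (Suc r) + Sball n r + (n choose Suc r) + (n choose Suc (Suc r))"
    using Suc by simp
  also have "\<dots> = Sball n (Suc (Suc r)) + Sball n (Suc r)"
    by (simp add: Sball_Suc)
  finally show ?case .
qed

lemma half_bound:
  assumes "finite V" "card V \<le> 2*r+1"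
  shows "2 ^ card V \<le> 2 * Sball (card V) r"
proof -
  let ?S = "{X. X \<subseteq> V \<and> card X \<le> r}"
  have "Pow V \<subseteq> ?S \<union> (\<lambda>X. V - X) ` ?S"
  proof
    fix X assume X: "X \<in> Pow V"
    show "X \<in> ?S \<union> (\<lambda>X. V - X) ` ?S"
    proof (cases "card X \<le> r")
      case True then show ?thesis using X by auto
    next
      case False
      have "card (V - X) = card V - card X" using X assms(1) by (simp add: card_Diff_subset finite_subset)
      then have "card (V - X) \<le> r" using False assms(2) by simp
      moreover have "X = V - (V - X)" using X by auto
      ultimately show ?thesis by blast
    qed
  qed
  then have "card (Pow V) \<le> card (?S \<union> (\<lambda>X. V - X) ` ?S)"
    by (rule card_mono[rotated]) (use assms in auto)
  also have "\<dots> \<le> card ?S + card ((\<lambda>X. V - X) ` ?S)" by (rule card_Un_le)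
  also have "\<dots> \<le> card ?S + card ?S" using card_image_le[of ?S "\<lambda>X. V - X"] assms by auto
  finally show ?thesis using card_small_subsets[OF assms(1), of r] assms by (simp add: card_Pow)
qed

lemma no_compl_bound:
  assumes "finite V" "F \<subseteq> Pow V" "\<And>X. X \<in> F \<Longrightarrow> V - X \<notin> F"
  shows "2 * card F \<le> 2 ^ card V"
proof -
  have inj: "inj_on (\<lambda>X. V - X) F" using assms(2) by (auto simp: inj_on_def)
  have "F \<inter> (\<lambda>X. V - X) ` F = {}" using assms(3) by auto
  moreover have "F \<union> (\<lambda>X. V - X) ` F \<subseteq> Pow V" using assms(2) by auto
  moreover have fin: "finite F" using assms(1,2) finite_subset by auto
  ultimately have "card F + card ((\<lambda>X. V - X) ` F) \<le> card (Pow V)"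
    by (metis card_Un_disjoint card_mono finite_Pow_iff finite_imageI assms(1))
  then show ?thesis using card_image[OF inj] by (simp add: card_Pow assms(1))
qed

definition shf :: "'a \<Rightarrow> 'a \<Rightarrow> 'a set set \<Rightarrow> 'a set \<Rightarrow> 'a set" where
  "shf j m F X = (if m \<in> X \<and> j \<notin> X \<and> insert j (X - {m}) \<notin> F then insert j (X - {m}) else X)"

lemma shf_inj: "inj_on (shf j m F) F"
proof (rule inj_onI)
  fix X Y assume XY: "X \<in> F" "Y \<in> F" "shf j m F X = shf j m F Y"
  show "X = Y"
  proof (cases "m \<in> X \<and> j \<notin> X \<and> insert j (X - {m}) \<notin> F")
    case cX: True
    show ?thesis
    proof (cases "m \<in> Y \<and> j \<notin> Y \<and> insert j (Y - {m}) \<notin> F")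
      case True
      then have "insert j (X - {m}) = insert j (Y - {m})" using cX XY by (simp add: shf_def)
      moreover have "j \<notin> X - {m}" "j \<notin> Y - {m}" using cX True by auto
      ultimately have "X - {m} = Y - {m}" by (metis insert_ident)
      then show ?thesis using cX True by blast
    next
      case False
      have "shf j m F Y = Y" unfolding shf_def by (rule if_not_P[OF False])
      then have "insert j (X - {m}) = Y" using cX XY by (simp add: shf_def)
      then show ?thesis using cX XY by simp
    qed
  next
    case cX: False
    show ?thesis
    proof (cases "m \<in> Y \<and> j \<notin> Y \<and> insert j (Y - {m}) \<notin> F")
      case True
      have "shf j m F X = X" unfolding shf_def by (rule if_not_P[OF cX])
      then have "insert j (Y - {m}) = X" using True XY by (simp add: shf_def)
      then show ?thesis using True XY by simp
    next
      case False
      have "shf j m F Y = Y" unfolding shf_def by (rule if_not_P[OF False])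
      moreover have "shf j m F X = X" unfolding shf_def by (rule if_not_P[OF cX])
      ultimately show ?thesis using XY by simp
    qed
  qed
qed

lemma card_ins_diff_le: "finite A \<Longrightarrow> m \<in> A \<Longrightarrow> card (insert j (A - {m})) \<le> card A"
proof -
  assume a: "finite A" "m \<in> A"
  have "card (insert j (A - {m})) \<le> Suc (card (A - {m}))" using a by (simp add: card_insert_if)
  moreover have "card (A - {m}) = card A - 1" using a by (simp add: card_Diff_singleton)
  moreover have "card A > 0" using a card_gt_0_iff by blast
  ultimately show ?thesis by linarith
qed

lemma shf_union:
  assumes fin: "\<And>X. X \<in> F \<Longrightarrow> finite X" and jm: "j \<noteq> m"
    and X: "X \<in> F" and Y: "Y \<in> F"
  shows "\<exists>X'\<in>F. \<exists>Y'\<in>F. card (shf j m F X \<union> shf j m F Y) \<le> card (X' \<union> Y')"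
proof -
  have one: "\<exists>X'\<in>F. \<exists>Y'\<in>F. card (shf j m F X \<union> Y) \<le> card (X' \<union> Y')"
    if X: "X \<in> F" and Y: "Y \<in> F" and mv: "m \<in> X \<and> j \<notin> X \<and> insert j (X - {m}) \<notin> F"
      and nmv: "\<not> (m \<in> Y \<and> j \<notin> Y \<and> insert j (Y - {m}) \<notin> F)" for X Y
  proof -
    have sX: "shf j m F X = insert j (X - {m})" using mv by (simp add: shf_def)
    consider (a) "m \<in> Y" "j \<notin> Y" "insert j (Y - {m}) \<in> F" | (b) "m \<notin> Y" | (c) "j \<in> Y"
      using nmv by blast
    then show ?thesis
    proof cases
      case a
      have "shf j m F X \<union> Y = X \<union> insert j (Y - {m})" using sX a mv by auto
      then show ?thesis using a X by (metis order_refl)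
    next
      case b
      have "shf j m F X \<union> Y = insert j ((X \<union> Y) - {m})" using sX b by auto
      moreover have "card (insert j ((X \<union> Y) - {m})) \<le> card (X \<union> Y)"
        using card_ins_diff_le[of "X \<union> Y" m j] fin X Y mv by auto
      ultimately show ?thesis using X Y by metis
    next
      case c
      have "shf j m F X \<union> Y \<subseteq> X \<union> Y" using sX c by auto
      then have "card (shf j m F X \<union> Y) \<le> card (X \<union> Y)"
        using fin X Y by (intro card_mono) auto
      then show ?thesis using X Y by metis
    qed
  qed
  show ?thesis
  proof (cases "m \<in> X \<and> j \<notin> X \<and> insert j (X - {m}) \<notin> F")
    case cX: True
    show ?thesis
    proof (cases "m \<in> Y \<and> j \<notin> Y \<and> insert j (Y - {m}) \<notin> F")
      case True
      have "shf j m F X \<union> shf j m F Y = insert j ((X \<union> Y) - {m})"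
        using cX True by (auto simp: shf_def)
      moreover have "card (insert j ((X \<union> Y) - {m})) \<le> card (X \<union> Y)"
        using card_ins_diff_le[of "X \<union> Y" m j] fin X Y cX by auto
      ultimately show ?thesis using X Y by metis
    next
      case False
      have "shf j m F Y = Y" unfolding shf_def by (rule if_not_P[OF False])
      then show ?thesis using one[OF X Y cX False] by simp
    qed
  next
    case cX: False
    have sX: "shf j m F X = X" unfolding shf_def by (rule if_not_P[OF cX])
    show ?thesis
    proof (cases "m \<in> Y \<and> j \<notin> Y \<and> insert j (Y - {m}) \<notin> F")
      case True
      obtain X' Y' where "X' \<in> F" "Y' \<in> F" "card (shf j m F Y \<union> X) \<le> card (X' \<union> Y')"
        using one[OF Y X True cX] by blast
      then show ?thesis using sX by (metis Un_commute)
    next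
      case False
      have "shf j m F Y = Y" unfolding shf_def by (rule if_not_P[OF False])
      then show ?thesis using sX X Y by (metis order_refl)
    qed
  qed
qed

definition shifted_at :: "'a \<Rightarrow> 'a set \<Rightarrow> 'a set set \<Rightarrow> bool" where
  "shifted_at m V F = (\<forall>X\<in>F. \<forall>j\<in>V. m \<in> X \<and> j \<notin> X \<longrightarrow> insert j (X - {m}) \<in> F)"

lemma compress_exists:
  assumes "finite V" "m \<in> V"
  shows "F \<subseteq> Pow V \<Longrightarrow> (\<forall>X\<in>F. \<forall>Y\<in>F. card (X \<union> Y) \<le> s) \<Longrightarrow>
    \<exists>G. G \<subseteq> Pow V \<and> card G = card F \<and> (\<forall>X\<in>G. \<forall>Y\<in>G. card (X \<union> Y) \<le> s) \<and> shifted_at m V G"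
proof (induction "card {X\<in>F. m\<in>X}" arbitrary: F rule: less_induct)
  case less
  show ?case
  proof (cases "shifted_at m V F")
    case True
    have "F \<subseteq> Pow V \<and> card F = card F \<and> (\<forall>X\<in>F. \<forall>Y\<in>F. card (X \<union> Y) \<le> s) \<and> shifted_at m V F"
      using less.prems True by simp
    then show ?thesis by (rule exI)
  next
    case False
    then obtain X j where X: "X \<in> F" "j \<in> V" "m \<in> X" "j \<notin> X" "insert j (X - {m}) \<notin> F"
      unfolding shifted_at_def by blast
    have jm: "j \<noteq> m" using X by auto
    have finF: "finite F" by (rule finite_subset[OF less.prems(1)]) (simp add: assms(1))
    have finX: "finite Y" if Y: "Y \<in> F" for Y
    proof -
      have "Y \<subseteq> V" using less.prems(1) Y by blast
      then show ?thesis using assms(1) by (rule finite_subset)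
    qed
    let ?G = "shf j m F ` F"
    have GV: "?G \<subseteq> Pow V" using less.prems(1) X(2) by (auto simp: shf_def)
    have cG: "card ?G = card F" by (rule card_image[OF shf_inj])
    have uG: "\<forall>A\<in>?G. \<forall>B\<in>?G. card (A \<union> B) \<le> s"
    proof (intro ballI)
      fix A B assume "A \<in> ?G" "B \<in> ?G"
      then obtain X1 Y1 where XY1: "X1 \<in> F" "Y1 \<in> F" "A = shf j m F X1" "B = shf j m F Y1" by blast
      then obtain X' Y' where XY': "X' \<in> F" "Y' \<in> F" "card (A \<union> B) \<le> card (X' \<union> Y')"
        using shf_union[OF finX jm XY1(1) XY1(2)] by auto
      have "card (X' \<union> Y') \<le> s" using less.prems(2) XY' by blast
      then show "card (A \<union> B) \<le> s" using XY' by linarith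
    qed
    have sub: "{Y\<in>?G. m\<in>Y} \<subseteq> {Y\<in>F. m\<in>Y} - {X}"
    proof
      fix Y assume "Y \<in> {Y\<in>?G. m\<in>Y}"
      then obtain X1 where X1: "X1 \<in> F" "Y = shf j m F X1" "m \<in> Y" by blast
      have nm: "\<not> (m \<in> X1 \<and> j \<notin> X1 \<and> insert j (X1 - {m}) \<notin> F)"
      proof
        assume c: "m \<in> X1 \<and> j \<notin> X1 \<and> insert j (X1 - {m}) \<notin> F"
        then have "Y = insert j (X1 - {m})" using X1 by (simp add: shf_def)
        then show False using X1(3) jm by auto
      qed
      have "shf j m F X1 = X1" unfolding shf_def by (rule if_not_P[OF nm])
      then have "Y = X1" using X1 by simp
      moreover have "X1 \<noteq> X" using nm X by auto
      ultimately show "Y \<in> {Y\<in>F. m\<in>Y} - {X}" using X1 by auto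
    qed
    have "card {Y\<in>?G. m\<in>Y} < card {Y\<in>F. m\<in>Y}"
    proof -
      have "card {Y\<in>?G. m\<in>Y} \<le> card ({Y\<in>F. m\<in>Y} - {X})"
        using sub finF by (intro card_mono) auto
      also have "\<dots> < card {Y\<in>F. m\<in>Y}"
        using X finF by (intro card_Diff1_less) auto
      finally show ?thesis .
    qed
    from less.hyps[OF this GV uG] obtain G where
      Gall: "G \<subseteq> Pow V \<and> card G = card ?G \<and> (\<forall>X\<in>G. \<forall>Y\<in>G. card (X \<union> Y) \<le> s) \<and> shifted_at m V G"
      by (rule exE)
    then have "G \<subseteq> Pow V \<and> card G = card F \<and> (\<forall>X\<in>G. \<forall>Y\<in>G. card (X \<union> Y) \<le> s) \<and> shifted_at m V G"
      using cG by simp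
    then show ?thesis by (rule exI)
  qed
qed

lemma union_bound:
  "finite V \<Longrightarrow> F \<subseteq> Pow V \<Longrightarrow> 2*r+1 \<le> card V \<Longrightarrow> (\<forall>X\<in>F. \<forall>Y\<in>F. card (X \<union> Y) \<le> 2*r)
   \<Longrightarrow> card F \<le> Sball (card V) r"
proof (induction "card V" arbitrary: V F r rule: less_induct)
  case less
  note fin = less.prems(1) and FV = less.prems(2) and cV = less.prems(3) and U = less.prems(4)
  have finF: "finite F" using fin FV by (metis finite_Pow_iff finite_subset)
  show ?case
  proof (cases "r = 0")
    case True
    have "F \<subseteq> {{}}"
    proof
      fix X assume X: "X \<in> F"
      then have "card (X \<union> X) \<le> 2*r" using U by blast
      then have "card X = 0" using True by simp
      moreover have "finite X" using X FV fin finite_subset by blast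
      ultimately show "X \<in> {{}}" by simp
    qed
    then have "card F \<le> card {{}::'a set}" by (intro card_mono) auto
    then have "card F \<le> 1" by simp
    then show ?thesis using True by (simp add: Sball_def)
  next
    case rpos: False
    show ?thesis
    proof (cases "card V = 2*r+1")
      case True
      have "2 * card F \<le> 2 ^ card V"
      proof (rule no_compl_bound[OF fin FV])
        fix X assume X: "X \<in> F"
        show "V - X \<notin> F"
        proof
          assume "V - X \<in> F"
          then have "card (X \<union> (V - X)) \<le> 2*r" using U X by blast
          moreover have "X \<union> (V - X) = V" using X FV by auto
          ultimately show False using True by simp
        qed
      qed
      moreover have "2 ^ card V \<le> 2 * Sball (card V) r" using half_bound[OF fin] True by simp
      ultimately show ?thesis by simp
    next
      case False
      then have cV2: "2*r+2 \<le> card V" using cV by simp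
      have "V \<noteq> {}" using cV2 by auto
      then obtain m where m: "m \<in> V" by blast
      obtain G where Gall: "G \<subseteq> Pow V \<and> card G = card F \<and> (\<forall>X\<in>G. \<forall>Y\<in>G. card (X \<union> Y) \<le> 2*r) \<and> shifted_at m V G"
        using compress_exists[OF fin m FV U] by (rule exE)
      have GV: "G \<subseteq> Pow V" using Gall by (elim conjE)
      have cG: "card G = card F" using Gall by (elim conjE)
      have UG: "\<forall>X\<in>G. \<forall>Y\<in>G. card (X \<union> Y) \<le> 2*r" using Gall by (elim conjE)
      have sG: "shifted_at m V G" using Gall by (elim conjE)
      have finG: "finite G" using fin GV by (metis finite_Pow_iff finite_subset)
      let ?V' = "V - {m}"
      have cV': "card ?V' = card V - 1" using m fin by simp
      have finV': "finite ?V'" using fin by simp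
      let ?G0 = "{X\<in>G. m \<notin> X}"
      let ?G1 = "(\<lambda>X. X - {m}) ` {X\<in>G. m \<in> X}"
      have split: "card G = card ?G0 + card ?G1"
      proof -
        have "inj_on (\<lambda>X. X - {m}) {X\<in>G. m \<in> X}"
        proof (rule inj_onI)
          fix X Y assume "X \<in> {X\<in>G. m \<in> X}" "Y \<in> {X\<in>G. m \<in> X}" "X - {m} = Y - {m}"
          then show "X = Y" by blast
        qed
        then have "card ?G1 = card {X\<in>G. m \<in> X}" by (rule card_image)
        moreover have "G = ?G0 \<union> {X\<in>G. m \<in> X}" by auto
        moreover have "card (?G0 \<union> {X\<in>G. m \<in> X}) = card ?G0 + card {X\<in>G. m \<in> X}"
          by (rule card_Un_disjoint) (use finG in auto)
        ultimately show ?thesis by simp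
      qed
      have b0: "card ?G0 \<le> Sball (card ?V') r"
      proof (rule less.hyps)
        show "card ?V' < card V" using cV' cV2 by simp
        show "finite ?V'" by (rule finV')
        show "?G0 \<subseteq> Pow ?V'" using GV by auto
        show "2*r+1 \<le> card ?V'" using cV' cV2 by simp
        show "\<forall>X\<in>?G0. \<forall>Y\<in>?G0. card (X \<union> Y) \<le> 2*r" using UG by auto
      qed
      have b1: "card ?G1 \<le> Sball (card ?V') (r - 1)"
      proof (rule less.hyps)
        show "card ?V' < card V" using cV' cV2 by simp
        show "finite ?V'" by (rule finV')
        show "?G1 \<subseteq> Pow ?V'" using GV by auto
        show "2*(r-1)+1 \<le> card ?V'" using cV' cV2 by simp
        show "\<forall>X\<in>?G1. \<forall>Y\<in>?G1. card (X \<union> Y) \<le> 2*(r-1)"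
        proof (intro ballI)
          fix X' Y' assume "X' \<in> ?G1" "Y' \<in> ?G1"
          then obtain X Y where XY: "X \<in> G" "Y \<in> G" "m \<in> X" "m \<in> Y" "X' = X - {m}" "Y' = Y - {m}"
            by blast
          have finXY: "finite X" "finite Y" using XY GV fin finite_subset by blast+
          have eq: "X \<union> Y = insert m (X' \<union> Y')" using XY by auto
          have "m \<notin> X' \<union> Y'" using XY by auto
          then have c1: "card (X \<union> Y) = Suc (card (X' \<union> Y'))" using eq finXY XY by simp
          then have le: "card (X' \<union> Y') \<le> 2*r - 1" using UG XY by fastforce
          show "card (X' \<union> Y') \<le> 2*(r-1)"
          proof (rule ccontr)
            assume "\<not> card (X' \<union> Y') \<le> 2*(r-1)"
            then have ceq: "card (X' \<union> Y') = 2*r - 1" using le rpos by linarith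
            have "card (X \<union> Y) < card V" using c1 ceq cV2 rpos by linarith
            moreover have "X \<union> Y \<subseteq> V" using XY GV by auto
            ultimately have "X \<union> Y \<noteq> V" by auto
            then obtain j where j: "j \<in> V" "j \<notin> X \<union> Y" using \<open>X \<union> Y \<subseteq> V\<close> by blast
            have "insert j (Y - {m}) \<in> G" using sG j XY unfolding shifted_at_def by blast
            then have "card (X \<union> insert j (Y - {m})) \<le> 2*r" using UG XY by blast
            moreover have "X \<union> insert j (Y - {m}) = insert j (X \<union> Y)" using XY by auto
            moreover have "card (insert j (X \<union> Y)) = Suc (card (X \<union> Y))" using j finXY by simp
            ultimately have "Suc (Suc (card (X' \<union> Y'))) \<le> 2*r" using c1 by simp
            then show False using ceq rpos by linarith
          qed
        qed
      qed
      have "card F \<le> Sball (card ?V') r + Sball (card ?V') (r - 1)" using split cG b0 b1 by linarith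
      also have "\<dots> = Sball (card V) r"
      proof -
        define n where "n = card V - 1"
        have n: "card V = Suc n" using cV2 unfolding n_def by simp
        define r' where "r' = r - 1"
        have r': "r = Suc r'" using rpos unfolding r'_def by simp
        show ?thesis using Sball_rec[of n r'] n r' cV' by simp
      qed
      finally show ?thesis .
    qed
  qed
qed


definition sdf :: "'a set \<Rightarrow> 'a set \<Rightarrow> 'a set" where
  "sdf X Y = (X - Y) \<union> (Y - X)"

definition dnf :: "'a \<Rightarrow> 'a set set \<Rightarrow> 'a set \<Rightarrow> 'a set" where
  "dnf i F X = (if i \<in> X \<and> X - {i} \<notin> F then X - {i} else X)"

lemma dnf_inj: "inj_on (dnf i F) F"
proof (rule inj_onI)
  fix X Y assume XY: "X \<in> F" "Y \<in> F" "dnf i F X = dnf i F Y"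
  show "X = Y"
  proof (cases "i \<in> X \<and> X - {i} \<notin> F")
    case cX: True
    then have sX: "dnf i F X = X - {i}" by (simp add: dnf_def)
    show ?thesis
    proof (cases "i \<in> Y \<and> Y - {i} \<notin> F")
      case True
      then have "dnf i F Y = Y - {i}" by (simp add: dnf_def)
      then have "X - {i} = Y - {i}" using sX XY by simp
      then show ?thesis using cX True by blast
    next
      case False
      have "dnf i F Y = Y" unfolding dnf_def by (rule if_not_P[OF False])
      then have "X - {i} = Y" using sX XY by simp
      then show ?thesis using cX XY by simp
    qed
  next
    case cX: False
    have sX: "dnf i F X = X" unfolding dnf_def by (rule if_not_P[OF cX])
    show ?thesis
    proof (cases "i \<in> Y \<and> Y - {i} \<notin> F")
      case True
      then have "dnf i F Y = Y - {i}" by (simp add: dnf_def)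
      then have "X = Y - {i}" using sX XY by simp
      then show ?thesis using True XY by simp
    next
      case False
      have "dnf i F Y = Y" unfolding dnf_def by (rule if_not_P[OF False])
      then show ?thesis using sX XY by simp
    qed
  qed
qed

lemma sdf_commute: "sdf X Y = sdf Y X"
  by (auto simp: sdf_def)

lemma dnf_diam:
  assumes X: "X \<in> F" and Y: "Y \<in> F"
  shows "\<exists>X'\<in>F. \<exists>Y'\<in>F. sdf (dnf i F X) (dnf i F Y) \<subseteq> sdf X' Y'"
proof -
  have one: "\<exists>Y'\<in>F. sdf (X - {i}) Y \<subseteq> sdf X Y'"
    if X: "X \<in> F" and Y: "Y \<in> F" and mv: "i \<in> X" and nmv: "\<not> (i \<in> Y \<and> Y - {i} \<notin> F)" for X Y
  proof (cases "i \<in> Y")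
    case True
    then have "Y - {i} \<in> F" using nmv by blast
    moreover have "sdf (X - {i}) Y \<subseteq> sdf X (Y - {i})" using True mv by (auto simp: sdf_def)
    ultimately show ?thesis by blast
  next
    case False
    then have "sdf (X - {i}) Y \<subseteq> sdf X Y" by (auto simp: sdf_def)
    then show ?thesis using Y by blast
  qed
  show ?thesis
  proof (cases "i \<in> X \<and> X - {i} \<notin> F")
    case cX: True
    then have sX: "dnf i F X = X - {i}" by (simp add: dnf_def)
    show ?thesis
    proof (cases "i \<in> Y \<and> Y - {i} \<notin> F")
      case True
      then have "dnf i F Y = Y - {i}" by (simp add: dnf_def)
      then have "sdf (dnf i F X) (dnf i F Y) \<subseteq> sdf X Y" using sX by (auto simp: sdf_def)
      then show ?thesis using X Y by blast
    next
      case False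
      have "dnf i F Y = Y" unfolding dnf_def by (rule if_not_P[OF False])
      then show ?thesis using one[OF X Y _ False] cX sX X by auto
    qed
  next
    case cX: False
    have sX: "dnf i F X = X" unfolding dnf_def by (rule if_not_P[OF cX])
    show ?thesis
    proof (cases "i \<in> Y \<and> Y - {i} \<notin> F")
      case True
      then have sY: "dnf i F Y = Y - {i}" by (simp add: dnf_def)
      obtain X' where "X' \<in> F" "sdf (Y - {i}) X \<subseteq> sdf Y X'" using one[OF Y X _ cX] True by auto
      then show ?thesis using sX sY Y by (metis sdf_commute)
    next
      case False
      have "dnf i F Y = Y" unfolding dnf_def by (rule if_not_P[OF False])
      then show ?thesis using sX X Y by auto
    qed
  qed
qed

definition down_closed :: "'a set set \<Rightarrow> bool" where
  "down_closed F = (\<forall>X\<in>F. \<forall>i\<in>X. X - {i} \<in> F)"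

lemma down_exists:
  assumes "finite V"
  shows "F \<subseteq> Pow V \<Longrightarrow> (\<forall>X\<in>F. \<forall>Y\<in>F. card (sdf X Y) \<le> s) \<Longrightarrow>
    \<exists>G. G \<subseteq> Pow V \<and> card G = card F \<and> (\<forall>X\<in>G. \<forall>Y\<in>G. card (sdf X Y) \<le> s) \<and> down_closed G"
proof (induction "\<Sum>X\<in>F. card X" arbitrary: F rule: less_induct)
  case less
  show ?case
  proof (cases "down_closed F")
    case True
    have "F \<subseteq> Pow V \<and> card F = card F \<and> (\<forall>X\<in>F. \<forall>Y\<in>F. card (sdf X Y) \<le> s) \<and> down_closed F"
      using less.prems True by simp
    then show ?thesis by (rule exI)
  next
    case False
    then obtain X i where X: "X \<in> F" "i \<in> X" "X - {i} \<notin> F"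
      unfolding down_closed_def by blast
    have finF: "finite F" by (rule finite_subset[OF less.prems(1)]) (simp add: assms(1))
    have finX: "finite Y" if Y: "Y \<in> F" for Y
    proof -
      have "Y \<subseteq> V" using less.prems(1) Y by blast
      then show ?thesis using assms(1) by (rule finite_subset)
    qed
    let ?G = "dnf i F ` F"
    have GV: "?G \<subseteq> Pow V" using less.prems(1) by (auto simp: dnf_def)
    have cG: "card ?G = card F" by (rule card_image[OF dnf_inj])
    have uG: "\<forall>A\<in>?G. \<forall>B\<in>?G. card (sdf A B) \<le> s"
    proof (intro ballI)
      fix A B assume "A \<in> ?G" "B \<in> ?G"
      then obtain X1 Y1 where XY1: "X1 \<in> F" "Y1 \<in> F" "A = dnf i F X1" "B = dnf i F Y1" by blast
      then obtain X' Y' where XY': "X' \<in> F" "Y' \<in> F" "sdf A B \<subseteq> sdf X' Y'"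
        using dnf_diam[OF XY1(1) XY1(2), of i] by auto
      have "finite (sdf X' Y')" using finX XY' by (simp add: sdf_def)
      then have "card (sdf A B) \<le> card (sdf X' Y')" using XY' by (intro card_mono)
      moreover have "card (sdf X' Y') \<le> s" using less.prems(2) XY' by blast
      ultimately show "card (sdf A B) \<le> s" by linarith
    qed
    have "(\<Sum>Y\<in>?G. card Y) = (\<Sum>Y\<in>F. card (dnf i F Y))"
      by (rule sum.reindex_cong[OF dnf_inj]) auto
    also have "\<dots> < (\<Sum>Y\<in>F. card Y)"
    proof (rule sum_strict_mono_ex1[OF finF])
      show "\<forall>Y\<in>F. card (dnf i F Y) \<le> card Y"
        using finX by (auto simp: dnf_def card_Diff_singleton)
      have "card (X - {i}) < card X" using X finX by (intro card_Diff1_less) auto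
      then show "\<exists>Y\<in>F. card (dnf i F Y) < card Y" using X by (auto simp: dnf_def)
    qed
    finally have meas: "(\<Sum>Y\<in>?G. card Y) < (\<Sum>Y\<in>F. card Y)" .
    from less.hyps[OF meas GV uG] obtain G where
      Gall: "G \<subseteq> Pow V \<and> card G = card ?G \<and> (\<forall>X\<in>G. \<forall>Y\<in>G. card (sdf X Y) \<le> s) \<and> down_closed G"
      by (rule exE)
    then have "G \<subseteq> Pow V \<and> card G = card F \<and> (\<forall>X\<in>G. \<forall>Y\<in>G. card (sdf X Y) \<le> s) \<and> down_closed G"
      using cG by simp
    then show ?thesis by (rule exI)
  qed
qed

lemma down_closed_diff:
  assumes "down_closed G" "finite Y"
  shows "X \<in> G \<Longrightarrow> X - Y \<in> G"
  using assms(2)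
proof (induction Y rule: finite_induct)
  case empty
  then show ?case by simp
next
  case (insert a Y)
  then have XY: "X - Y \<in> G" by simp
  show ?case
  proof (cases "a \<in> X - Y")
    case True
    then have "(X - Y) - {a} \<in> G" using assms(1) XY unfolding down_closed_def by blast
    moreover have "X - insert a Y = (X - Y) - {a}" by auto
    ultimately show ?thesis by simp
  next
    case False
    then have "X - insert a Y = X - Y" by auto
    then show ?thesis using XY by simp
  qed
qed

theorem kleitman:
  assumes fin: "finite V" and FV: "F \<subseteq> Pow V" and cV: "2*r+1 \<le> card V"
    and D: "\<forall>X\<in>F. \<forall>Y\<in>F. card (sdf X Y) \<le> 2*r"
  shows "card F \<le> Sball (card V) r"
proof -
  obtain G where Gall: "G \<subseteq> Pow V \<and> card G = card F \<and> (\<forall>X\<in>G. \<forall>Y\<in>G. card (sdf X Y) \<le> 2*r) \<and> down_closed G"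
    using down_exists[OF fin FV D] by (rule exE)
  have GV: "G \<subseteq> Pow V" using Gall by (elim conjE)
  have cG: "card G = card F" using Gall by (elim conjE)
  have DG: "\<forall>X\<in>G. \<forall>Y\<in>G. card (sdf X Y) \<le> 2*r" using Gall by (elim conjE)
  have dG: "down_closed G" using Gall by (elim conjE)
  have "\<forall>X\<in>G. \<forall>Y\<in>G. card (X \<union> Y) \<le> 2*r"
  proof (intro ballI)
    fix X Y assume XY: "X \<in> G" "Y \<in> G"
    have "finite Y" using XY GV fin finite_subset by blast
    then have "X - Y \<in> G" using down_closed_diff[OF dG] XY by blast
    then have "card (sdf (X - Y) Y) \<le> 2*r" using DG XY by blast
    moreover have "sdf (X - Y) Y = X \<union> Y" by (auto simp: sdf_def)
    ultimately show "card (X \<union> Y) \<le> 2*r" by simp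
  qed
  then have "card G \<le> Sball (card V) r" using union_bound[OF fin GV cV] by blast
  then show ?thesis using cG by simp
qed


lemma words_bound:
  fixes Zs Os :: "'b \<Rightarrow> 'a set" and F :: "'b set" and V :: "'a set"
  assumes finV: "finite V" and finF: "finite F"
    and ZV: "\<And>K. K \<in> F \<Longrightarrow> Zs K \<subseteq> V \<and> Os K \<subseteq> V \<and> Zs K \<inter> Os K = {}"
    and T: "\<And>K L. K \<in> F \<Longrightarrow> L \<in> F \<Longrightarrow> K \<noteq> L \<Longrightarrow>
              (Zs K \<inter> Os L) \<union> (Os K \<inter> Zs L) \<noteq> {} \<and> card ((Zs K \<inter> Os L) \<union> (Os K \<inter> Zs L)) \<le> k"
    and k1: "1 \<le> k" and t1: "1 \<le> t" and Dle: "k + 2*t - 2 \<le> card V - 1"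
  shows "card F \<le> 2^(card V - t) + Sball (card V) (nat \<lceil>real (k + 2*t - 2) / 2\<rceil>)"
proof -
  define st where "st K = V - Zs K - Os K" for K
  define big where "big = {K\<in>F. t \<le> card (st K)}"
  define small where "small = {K\<in>F. card (st K) < t}"
  define D where "D = k + 2*t - 2"
  define r where "r = nat \<lceil>real D / 2\<rceil>"
  have finst: "finite (st K)" for K using finV by (simp add: st_def)
  have tV: "t \<le> card V" using Dle k1 t1 by linarith
  define cube where "cube K = (\<lambda>Y. Os K \<union> Y) ` Pow (st K)" for K
  have ccube: "card (cube K) = 2 ^ card (st K)" if "K \<in> F" for K
  proof -
    have "inj_on (\<lambda>Y. Os K \<union> Y) (Pow (st K))"
    proof (rule inj_onI)
      fix Y1 Y2 assume "Y1 \<in> Pow (st K)" "Y2 \<in> Pow (st K)" "Os K \<union> Y1 = Os K \<union> Y2"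
      moreover have "Y1 \<inter> Os K = {}" "Y2 \<inter> Os K = {}" using calculation by (auto simp: st_def)
      ultimately show "Y1 = Y2" by blast
    qed
    then show ?thesis unfolding cube_def using card_image card_Pow finst by metis
  qed
  have cubeV: "cube K \<subseteq> Pow V" if "K \<in> F" for K
    using ZV[OF that] by (auto simp: cube_def st_def)
  have cdisj: "cube K \<inter> cube L = {}" if "K \<in> F" "L \<in> F" "K \<noteq> L" for K L
  proof (rule ccontr)
    assume "cube K \<inter> cube L \<noteq> {}"
    then obtain Y1 Y2 where Y: "Y1 \<subseteq> st K" "Y2 \<subseteq> st L" "Os K \<union> Y1 = Os L \<union> Y2"
      unfolding cube_def by blast
    have "(Zs K \<inter> Os L) \<union> (Os K \<inter> Zs L) \<noteq> {}" using T[OF that] by blast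
    then obtain x where "x \<in> (Zs K \<inter> Os L) \<union> (Os K \<inter> Zs L)" by blast
    then show False using Y ZV[OF that(1)] ZV[OF that(2)] unfolding st_def by blast
  qed
  have "(\<Sum>K\<in>big. (2::nat)^card (st K)) = card (\<Union>K\<in>big. cube K)"
  proof -
    have "card (\<Union>K\<in>big. cube K) = (\<Sum>K\<in>big. card (cube K))"
    proof (rule card_UN_disjoint)
      show "finite big" using finF by (simp add: big_def)
      show "\<forall>K\<in>big. finite (cube K)" using finst by (simp add: cube_def)
      show "\<forall>K\<in>big. \<forall>L\<in>big. K \<noteq> L \<longrightarrow> cube K \<inter> cube L = {}"
        using cdisj by (auto simp: big_def)
    qed
    then show ?thesis using ccube by (simp add: big_def)
  qed
  also have "\<dots> \<le> card (Pow V)"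
    using cubeV finV by (intro card_mono) (auto simp: big_def)
  finally have "(\<Sum>K\<in>big. (2::nat)^card (st K)) \<le> 2 ^ card V" using finV by (simp add: card_Pow)
  moreover have "(\<Sum>K\<in>big. (2::nat)^t) \<le> (\<Sum>K\<in>big. 2^card (st K))"
    by (rule sum_mono) (auto simp: big_def)
  ultimately have "card big * 2^t \<le> 2^(card V - t) * 2^t"
    using tV by (simp add: power_add[symmetric])
  then have bigb: "card big \<le> 2^(card V - t)" by simp
  have injO: "inj_on Os small"
  proof (rule inj_onI)
    fix K L assume KL: "K \<in> small" "L \<in> small" "Os K = Os L"
    show "K = L"
    proof (rule ccontr)
      assume "K \<noteq> L"
      moreover have "K \<in> F" "L \<in> F" using KL by (auto simp: small_def)
      ultimately have "(Zs K \<inter> Os L) \<union> (Os K \<inter> Zs L) \<noteq> {}" using T by blast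
      then obtain x where "x \<in> (Zs K \<inter> Os L) \<union> (Os K \<inter> Zs L)" by blast
      then show False using KL ZV[of K] ZV[of L] by (auto simp: small_def)
    qed
  qed
  let ?G = "Os ` small"
  have GV: "?G \<subseteq> Pow V" using ZV by (auto simp: small_def)
  have diam: "card (sdf X Y) \<le> D" if XYG: "X \<in> ?G" "Y \<in> ?G" for X Y
  proof -
    obtain K L where KL: "K \<in> small" "L \<in> small" "X = Os K" "Y = Os L" using XYG by blast
    show ?thesis
    proof (cases "K = L")
      case True
      then show ?thesis using KL by (simp add: sdf_def)
    next
      case False
      let ?T = "(Zs K \<inter> Os L) \<union> (Os K \<inter> Zs L)"
      have KF: "K \<in> F" "L \<in> F" using KL by (auto simp: small_def)
      have "sdf X Y \<subseteq> ?T \<union> st K \<union> st L"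
        using KL ZV[OF KF(1)] ZV[OF KF(2)] by (auto simp: sdf_def st_def)
      then have "card (sdf X Y) \<le> card (?T \<union> st K \<union> st L)"
        using finst finV ZV[OF KF(1)] by (intro card_mono) (auto intro: finite_subset)
      also have "\<dots> \<le> card ?T + card (st K) + card (st L)"
        by (metis card_Un_le add_le_mono1 order_trans)
      also have "\<dots> \<le> k + (t - 1) + (t - 1)"
        using T[OF KF False] KL by (auto simp: small_def)
      finally show ?thesis unfolding D_def using t1 by linarith
    qed
  qed
  have D2r: "D \<le> 2 * r"
  proof -
    have "real D / 2 \<le> of_int \<lceil>real D / 2\<rceil>" by (rule le_of_int_ceiling)
    moreover have "\<lceil>real D / 2\<rceil> \<ge> 0" by simp
    ultimately have "real D \<le> 2 * real r" unfolding r_def by linarith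
    then show ?thesis by linarith
  qed
  have smallb: "card small \<le> Sball (card V) r"
  proof (cases "2*r+1 \<le> card V")
    case True
    have "\<forall>X\<in>?G. \<forall>Y\<in>?G. card (sdf X Y) \<le> 2*r"
    proof (intro ballI)
      fix X Y assume "X \<in> ?G" "Y \<in> ?G"
      then have "card (sdf X Y) \<le> D" by (rule diam)
      then show "card (sdf X Y) \<le> 2*r" using D2r by linarith
    qed
    then have "card ?G \<le> Sball (card V) r" by (rule kleitman[OF finV GV True])
    then show ?thesis using card_image[OF injO] by simp
  next
    case False
    have "2 * card ?G \<le> 2 ^ card V"
    proof (rule no_compl_bound[OF finV GV])
      fix X assume X: "X \<in> ?G"
      show "V - X \<notin> ?G"
      proof
        assume "V - X \<in> ?G"
        then have "card (sdf X (V - X)) \<le> D" by (rule diam[OF X])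
        moreover have XV: "X \<subseteq> V" using X GV by blast
        then have "sdf X (V - X) = V" unfolding sdf_def by blast
        ultimately have "card V \<le> k + 2*t - 2" unfolding D_def by simp
        then show False using Dle k1 t1 by linarith
      qed
    qed
    moreover have "2 ^ card V \<le> 2 * Sball (card V) r" using half_bound[OF finV] False by simp
    ultimately show ?thesis using card_image[OF injO] by simp
  qed
  have "F = big \<union> small" by (auto simp: big_def small_def)
  moreover have "big \<inter> small = {}" by (auto simp: big_def small_def)
  ultimately have "card F = card big + card small"
    using finF by (metis card_Un_disjoint finite_Un)
  then show ?thesis using bigb smallb unfolding r_def D_def by linarith
qed



lemma nb_iff:
  fixes a b c e :: "real^'n"
  assumes ab: "\<forall>i. a$i < b$i" and ce: "\<forall>i. c$i < e$i" and kd: "k \<le> CARD('n)"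
  shows "k_neighborly k (cbox a b) (cbox c e) \<longleftrightarrow>
    (\<forall>i. a$i \<le> e$i \<and> c$i \<le> b$i) \<and> {i. b$i = c$i \<or> e$i = a$i} \<noteq> {} \<and>
    card {i. b$i = c$i \<or> e$i = a$i} \<le> k"
proof -
  let ?lo = "(\<chi> i. max (a$i) (c$i)) :: real^'n"
  let ?hi = "(\<chi> i. min (b$i) (e$i)) :: real^'n"
  let ?T = "{i. b$i = c$i \<or> e$i = a$i}"
  have int: "cbox a b \<inter> cbox c e = cbox ?lo ?hi"
    using Int_interval_cart[of a b c e] by (simp add: interval_cbox_cart)
  show ?thesis
  proof (cases "\<forall>i. a$i \<le> e$i \<and> c$i \<le> b$i")
    case True
    have le: "\<forall>i. ?lo$i \<le> ?hi$i"
    proof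
      fix i
      have "a$i < b$i" "c$i < e$i" "a$i \<le> e$i" "c$i \<le> b$i" using True ab ce by auto
      then show "?lo$i \<le> ?hi$i" by (simp add: max_def min_def)
    qed
    have eqI: "{i. ?lo$i < ?hi$i} = UNIV - ?T"
    proof (rule set_eqI)
      fix i
      have "a$i < b$i" "c$i < e$i" "a$i \<le> e$i" "c$i \<le> b$i" using True ab ce by auto
      then show "i \<in> {i. ?lo$i < ?hi$i} \<longleftrightarrow> i \<in> UNIV - ?T"
        by (auto simp: max_def min_def)
    qed
    have "card {i. ?lo$i < ?hi$i} = CARD('n) - card ?T"
      unfolding eqI by (subst card_Diff_subset) auto
    then have ad: "aff_dim (cbox a b \<inter> cbox c e) = int (CARD('n) - card ?T)"
      using aff_dim_cbox_cart[OF le] int by simp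
    have "card ?T \<le> CARD('n)" by (rule card_mono) auto
    moreover have ne: "?T \<noteq> {} \<longleftrightarrow> 0 < card ?T" by (simp add: card_gt_0_iff)
    ultimately show ?thesis using True ad unfolding k_neighborly_def ne
      by auto
  next
    case False
    then obtain i where "\<not> (a$i \<le> e$i \<and> c$i \<le> b$i)" by blast
    then have i: "e$i < a$i \<or> b$i < c$i" by linarith
    have "cbox a b \<inter> cbox c e = {}"
    proof (rule ccontr)
      assume "cbox a b \<inter> cbox c e \<noteq> {}"
      then obtain x where "x \<in> cbox a b" "x \<in> cbox c e" by blast
      then have "a$i \<le> x$i" "x$i \<le> b$i" "c$i \<le> x$i" "x$i \<le> e$i" by (auto simp: mem_box_cart)
      then show False using i by linarith
    qed
    then show ?thesis using False kd unfolding k_neighborly_def by simp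
  qed
qed


lemma lower_bound:
  assumes k1: "1 \<le> k" and kd: "k \<le> CARD('n::finite) - 1"
  shows "enat (Sball CARD('n) (k div 2)) \<le> n_nb k TYPE('n)"
proof -
  define lo :: "'n set \<Rightarrow> real^'n" where "lo S = (\<chi> i. if i \<in> S then 0 else 1)" for S
  define hi :: "'n set \<Rightarrow> real^'n" where "hi S = (\<chi> i. if i \<in> S then 1 else 2)" for S
  define bx where "bx S = cbox (lo S) (hi S)" for S
  let ?A = "{S::'n set. card S \<le> k div 2}"
  let ?Fam = "bx ` ?A"
  have lohi: "\<forall>i. lo S $ i < hi S $ i" for S by (simp add: lo_def hi_def)
  have inj: "inj_on bx ?A"
  proof (rule inj_onI)
    fix S T assume "S \<in> ?A" "T \<in> ?A" and eq: "bx S = bx T"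
    have inS: "lo S \<in> bx S" "lo T \<in> bx T" unfolding bx_def using lohi
      by (simp_all add: mem_box_cart less_imp_le)
    have m1: "lo S \<in> cbox (lo T) (hi T)" using inS(1) eq unfolding bx_def by simp
    have m2: "lo T \<in> cbox (lo S) (hi S)" using inS(2) eq unfolding bx_def by simp
    have "\<forall>i. lo T $ i \<le> lo S $ i \<and> lo S $ i \<le> lo T $ i"
      using m1 m2 unfolding mem_box_cart by blast
    then have li: "lo S $ i = lo T $ i" for i by (meson order_antisym)
    have "(i \<in> S) = (i \<in> T)" for i
      using li[of i] unfolding lo_def by (cases "i \<in> S"; cases "i \<in> T") auto
    then show "S = T" by blast
  qed
  have fam: "k_neighborly_family k ?Fam"
    unfolding k_neighborly_family_def
  proof (intro conjI ballI impI)
    fix K assume "K \<in> ?Fam"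
    then show "standard_box K" unfolding standard_box_def bx_def using lohi by blast
  next
    fix K L assume K: "K \<in> ?Fam" and L: "L \<in> ?Fam" and KL: "K \<noteq> L"
    then obtain S T where ST: "S \<in> ?A" "T \<in> ?A" "K = bx S" "L = bx T" by blast
    have SneT: "S \<noteq> T" using ST KL by auto
    have tch: "{i. hi S $ i = lo T $ i \<or> hi T $ i = lo S $ i} = sdf S T"
      by (auto simp: lo_def hi_def sdf_def)
    have "sdf S T \<noteq> {}" using SneT by (auto simp: sdf_def)
    moreover have "card (sdf S T) \<le> k"
    proof -
      have "card (sdf S T) \<le> card (S - T) + card (T - S)" unfolding sdf_def by (rule card_Un_le)
      also have "\<dots> \<le> card S + card T" by (intro add_mono card_mono) auto
      also have "\<dots> \<le> k" using ST by simp
      finally show ?thesis .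
    qed
    moreover have "\<forall>i. lo S $ i \<le> hi T $ i \<and> lo T $ i \<le> hi S $ i" by (simp add: lo_def hi_def)
    ultimately show "k_neighborly k K L"
      unfolding ST bx_def using nb_iff[OF lohi lohi, of k S T] kd tch by simp
  qed
  have finA: "finite ?Fam" by simp
  have "card ?Fam = card ?A" by (rule card_image[OF inj])
  also have "\<dots> = Sball CARD('n) (k div 2)" using card_small_subsets[of "UNIV::'n set" "k div 2"] by simp
  finally have "enat (Sball CARD('n) (k div 2)) = (if finite ?Fam then enat (card ?Fam) else \<infinity>)"
    using finA by simp
  also have "\<dots> \<le> n_nb k TYPE('n)"
    unfolding n_nb_def by (rule Sup_upper) (use fam in blast)
  finally show ?thesis .
qed


lemma upper_finite:
  assumes fam: "k_neighborly_family k (G :: (real^'n::finite) set set)" and finG: "finite G"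
    and k1: "1 \<le> k" and t1: "1 \<le> t" and Dle: "k + 2*t - 2 \<le> CARD('n) - 1"
  shows "card G \<le> 2^(CARD('n) - t) + Sball CARD('n) (nat \<lceil>real (k + 2*t - 2) / 2\<rceil>)"
proof -
  have kd: "k \<le> CARD('n)" using Dle t1 by linarith
  have "\<forall>K\<in>G. \<exists>p. (\<forall>i. fst p $ i < snd p $ i) \<and> K = cbox (fst p) (snd p)"
  proof
    fix K assume "K \<in> G"
    then have "standard_box K" using fam unfolding k_neighborly_family_def by blast
    then obtain a b where "\<forall>i. a $ i < b $ i" "K = cbox a b" unfolding standard_box_def by blast
    then show "\<exists>p. (\<forall>i. fst p $ i < snd p $ i) \<and> K = cbox (fst p) (snd p)"
      by (intro exI[of _ "(a, b)"]) simp
  qed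
  from bchoice[OF this] obtain f where f: "\<forall>K\<in>G. (\<forall>i. fst (f K) $ i < snd (f K) $ i) \<and> K = cbox (fst (f K)) (snd (f K))"
    by blast
  define lo where "lo K = fst (f K)" for K
  define hi where "hi K = snd (f K)" for K
  have lohi: "\<And>K. K \<in> G \<Longrightarrow> \<forall>i. lo K $ i < hi K $ i" using f unfolding lo_def hi_def by blast
  have Keq: "\<And>K. K \<in> G \<Longrightarrow> K = cbox (lo K) (hi K)" using f unfolding lo_def hi_def by blast
  have nbG: "(\<forall>i. lo K $ i \<le> hi L $ i \<and> lo L $ i \<le> hi K $ i) \<and>
      {i. hi K $ i = lo L $ i \<or> hi L $ i = lo K $ i} \<noteq> {} \<and>
      card {i. hi K $ i = lo L $ i \<or> hi L $ i = lo K $ i} \<le> k"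
    if KL: "K \<in> G" "L \<in> G" "K \<noteq> L" for K L
  proof -
    have "k_neighborly k K L" using fam KL unfolding k_neighborly_family_def by blast
    moreover have eqK: "cbox (lo K) (hi K) = K" using Keq[OF KL(1)] by (rule sym)
    moreover have eqL: "cbox (lo L) (hi L) = L" using Keq[OF KL(2)] by (rule sym)
    ultimately have "k_neighborly k (cbox (lo K) (hi K)) (cbox (lo L) (hi L))" by simp
    then show ?thesis using nb_iff[OF lohi[OF KL(1)] lohi[OF KL(2)] kd] by simp
  qed
  have meet: "\<And>K L i. K \<in> G \<Longrightarrow> L \<in> G \<Longrightarrow> lo K $ i \<le> hi L $ i"
  proof -
    fix K L i assume KL: "K \<in> G" "L \<in> G"
    show "lo K $ i \<le> hi L $ i"
    proof (cases "K = L")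
      case True then show ?thesis using lohi[OF KL(1)] by (simp add: less_imp_le)
    next
      case False then show ?thesis using nbG[OF KL False] by blast
    qed
  qed
  show ?thesis
  proof (cases "G = {}")
    case True then show ?thesis by simp
  next
    case Gne: False
    define P where "P i = Max ((\<lambda>K. lo K $ i) ` G)" for i
    have Pge: "\<And>K i. K \<in> G \<Longrightarrow> lo K $ i \<le> P i" unfolding P_def using finG by simp
    have Ple: "\<And>K i. K \<in> G \<Longrightarrow> P i \<le> hi K $ i"
    proof -
      fix K i assume K: "K \<in> G"
      have "P i \<in> (\<lambda>K. lo K $ i) ` G" unfolding P_def using finG Gne by (intro Max_in) auto
      then obtain M where "M \<in> G" "P i = lo M $ i" by blast
      then show "P i \<le> hi K $ i" using meet[OF _ K] by simp
    qed
    define Zs where "Zs K = {i. hi K $ i = P i}" for K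
    define Os where "Os K = {i. lo K $ i = P i}" for K
    have tch: "{i. hi K $ i = lo L $ i \<or> hi L $ i = lo K $ i} = (Zs K \<inter> Os L) \<union> (Os K \<inter> Zs L)"
      if KL: "K \<in> G" "L \<in> G" for K L
    proof (rule set_eqI)
      fix i
      have a: "lo K $ i \<le> P i" "lo L $ i \<le> P i" "P i \<le> hi K $ i" "P i \<le> hi L $ i"
        using Pge Ple KL by auto
      show "i \<in> {i. hi K $ i = lo L $ i \<or> hi L $ i = lo K $ i} \<longleftrightarrow> i \<in> (Zs K \<inter> Os L) \<union> (Os K \<inter> Zs L)"
        unfolding Zs_def Os_def using a by auto
    qed
    have "card G \<le> 2^(card (UNIV::'n set) - t) + Sball (card (UNIV::'n set)) (nat \<lceil>real (k + 2*t - 2) / 2\<rceil>)"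
    proof (rule words_bound[where Zs=Zs and Os=Os])
      show "finite (UNIV::'n set)" by simp
      show "finite G" by (rule finG)
      show "Zs K \<subseteq> UNIV \<and> Os K \<subseteq> UNIV \<and> Zs K \<inter> Os K = {}" if K: "K \<in> G" for K
      proof -
        have "Zs K \<inter> Os K = {}"
        proof (rule ccontr)
          assume "Zs K \<inter> Os K \<noteq> {}"
          then obtain i where "hi K $ i = P i" "lo K $ i = P i" unfolding Zs_def Os_def by blast
          then show False using lohi[OF K] by (metis less_irrefl)
        qed
        then show ?thesis by simp
      qed
      show "(Zs K \<inter> Os L) \<union> (Os K \<inter> Zs L) \<noteq> {} \<and> card ((Zs K \<inter> Os L) \<union> (Os K \<inter> Zs L)) \<le> k"
        if KL: "K \<in> G" "L \<in> G" "K \<noteq> L" for K L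
        using nbG[OF KL] tch[OF KL(1,2)] by simp
      show "1 \<le> k" "1 \<le> t" by (rule k1, rule t1)
      show "k + 2*t - 2 \<le> card (UNIV::'n set) - 1" using Dle by simp
    qed
    then show ?thesis by simp
  qed
qed

lemma nb_family_subset: "k_neighborly_family k F \<Longrightarrow> G \<subseteq> F \<Longrightarrow> k_neighborly_family k G"
  unfolding k_neighborly_family_def by (meson subsetD)

lemma upper_bound:
  assumes k1: "1 \<le> k" and t1: "1 \<le> t" and Dle: "k + 2*t - 2 \<le> CARD('n::finite) - 1"
  shows "n_nb k TYPE('n) \<le> enat (2^(CARD('n) - t) + Sball CARD('n) (nat \<lceil>real (k + 2*t - 2) / 2\<rceil>))"
proof -
  define B where "B = 2^(CARD('n) - t) + Sball CARD('n) (nat \<lceil>real (k + 2*t - 2) / 2\<rceil>)"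
  have fb: "card F \<le> B" if F: "k_neighborly_family k (F :: (real^'n) set set)" "finite F" for F
    unfolding B_def by (rule upper_finite[OF F k1 t1 Dle])
  have "(if finite F then enat (card F) else \<infinity>) \<le> enat B"
    if F: "k_neighborly_family k (F :: (real^'n) set set)" for F
  proof (cases "finite F")
    case True
    then show ?thesis using fb[OF F True] by simp
  next
    case False
    obtain G where G: "finite G" "card G = Suc B" "G \<subseteq> F"
      using infinite_arbitrarily_large[OF False] by blast
    have "k_neighborly_family k G" by (rule nb_family_subset[OF F G(3)])
    then have "card G \<le> B" using fb G(1) by blast
    then show ?thesis using G(2) by simp
  qed
  then have "n_nb k TYPE('n) \<le> enat B"
    unfolding n_nb_def by (intro Sup_least) blast
  then show ?thesis unfolding B_def .
qed

theorem theorem1: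
  shows "(\<forall>k. 1 \<le> k \<and> k \<le> CARD('n::finite) - 1 \<longrightarrow>
           enat (\<Sum>i = 0..k div 2. CARD('n) choose i) \<le> n_nb k TYPE('n)) \<and>
         (\<forall>k t. 1 \<le> k \<and> 1 \<le> t \<and> k \<le> k + 2 * t - 2 \<and> k + 2 * t - 2 \<le> CARD('n) - 1 \<longrightarrow>
           n_nb k TYPE('n) \<le>
             enat (2 ^ (CARD('n) - t) +
                   (\<Sum>i = 0..nat \<lceil>real (k + 2 * t - 2) / 2\<rceil>. CARD('n) choose i)))"
proof (intro conjI allI impI)
  fix k :: nat
  assume "1 \<le> k \<and> k \<le> CARD('n) - 1"
  then have "enat (Sball CARD('n) (k div 2)) \<le> n_nb k TYPE('n)"
    using lower_bound by blast
  then show "enat (\<Sum>i = 0..k div 2. CARD('n) choose i) \<le> n_nb k TYPE('n)"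
    unfolding Sball_def .
next
  fix k t :: nat
  assume a: "1 \<le> k \<and> 1 \<le> t \<and> k \<le> k + 2 * t - 2 \<and> k + 2 * t - 2 \<le> CARD('n) - 1"
  then have "n_nb k TYPE('n) \<le> enat (2^(CARD('n) - t) + Sball CARD('n) (nat \<lceil>real (k + 2*t - 2) / 2\<rceil>))"
    using upper_bound by blast
  then show "n_nb k TYPE('n) \<le> enat (2 ^ (CARD('n) - t) +
                   (\<Sum>i = 0..nat \<lceil>real (k + 2 * t - 2) / 2\<rceil>. CARD('n) choose i))"
    unfolding Sball_def .
qed

end
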